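(* Let $x_1\in\mathbb R$ with $|x_1|\le1$. For any $\alpha\in(0,1]$ and any $0\le\beta<\alpha/2$, $$I_{\alpha,\beta}:=\iiint_{u_1^2+u_2^2+v_2^2<1}\frac{|u_1-x_1|^{-1+\alpha}}{\big(u_1^2+u_2^2+v_2^2\big)^{1+\beta}}\,du_1\,du_2\,dv_2\le A_{\alpha,\beta}<\infty,$$ where the constant $A_{\alpha,\beta}$ is independent of $x_1$. *)

theory Defs
  imports "HOL-Analysis.Analysis"
begin

end

theory Submission
  imports Defs
begin

lemma real_bound:
  fixes a b c d be q p ga al :: real
  assumes a: "a > 0" and b: "b > 0" and c: "c > 0" and d: "d > 0"
    and q: "q \<ge> 0" and pdef: "q/2 + p = 1 + be" and gdef: "ga = 1 - al + q" and p0: "p \<ge> 0" and al: "al \<le> 1"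
  shows "a powr (-1 + al) / (b\<^sup>2 + c\<^sup>2 + d\<^sup>2) powr (1 + be)
     \<le> (a powr (-ga) + b powr (-ga)) * c powr (-p) * d powr (-p)"
proof -
  define r where "r = b\<^sup>2 + c\<^sup>2 + d\<^sup>2"
  have r: "r > 0" using b unfolding r_def by (simp add: add_pos_nonneg)
  have e1: "1 / r powr (1 + be) = r powr (-(q/2)) * r powr (-(p/2)) * r powr (-(p/2))"
  proof -
    have "r powr (-(q/2)) * r powr (-(p/2)) * r powr (-(p/2)) = r powr (-(q/2) + -(p/2) + -(p/2))"
      by (simp only: powr_add)
    also have "-(q/2) + -(p/2) + -(p/2) = -(1+be)" using pdef by linarith
    finally have X: "r powr (-(q/2)) * r powr (-(p/2)) * r powr (-(p/2)) = r powr (-(1+be))" .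
    show ?thesis unfolding X by (simp only: powr_minus_divide)
  qed
  have sq: "(x\<^sup>2) powr (-(s/2)) = x powr (-s)" if x: "x > 0" for x s :: real
    proof -
    have "(x\<^sup>2) powr (-(s/2)) = (x powr 2) powr (-(s/2))" using x by (simp add: powr_numeral)
    also have "\<dots> = x powr (-s)" by (simp add: powr_powr)
    finally show ?thesis .
  qed
  have h1: "r powr (-(q/2)) \<le> b powr (-q)"
  proof -
    have "r powr (-(q/2)) \<le> (b\<^sup>2) powr (-(q/2))"
      by (rule powr_mono2') (use q b r in \<open>auto simp: r_def\<close>)
    thus ?thesis using sq[OF b] by simp
  qed
  have h2: "r powr (-(p/2)) \<le> c powr (-p)"
  proof -
    have "r powr (-(p/2)) \<le> (c\<^sup>2) powr (-(p/2))"
      by (rule powr_mono2') (use p0 c r in \<open>auto simp: r_def\<close>)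
    thus ?thesis using sq[OF c] by simp
  qed
  have h3: "r powr (-(p/2)) \<le> d powr (-p)"
  proof -
    have "r powr (-(p/2)) \<le> (d\<^sup>2) powr (-(p/2))"
      by (rule powr_mono2') (use p0 d r in \<open>auto simp: r_def\<close>)
    thus ?thesis using sq[OF d] by simp
  qed
  have h4: "a powr (-1 + al) * b powr (-q) \<le> a powr (-ga) + b powr (-ga)"
  proof (cases "a \<le> b")
    case True
    have "b powr (-q) \<le> a powr (-q)" by (rule powr_mono2') (use q a True in auto)
    hence "a powr (-1 + al) * b powr (-q) \<le> a powr (-1 + al) * a powr (-q)"
      by (simp add: mult_left_mono)
    also have "\<dots> = a powr (-1 + al + -q)" by (simp only: powr_add)
    also have "-1 + al + -q = -ga" using gdef by linarith
    finally show ?thesis by (smt (verit) powr_ge_zero)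
  next
    case False
    have "a powr (-1 + al) \<le> b powr (-1 + al)" by (rule powr_mono2') (use al a b False in auto)
    hence "a powr (-1 + al) * b powr (-q) \<le> b powr (-1 + al) * b powr (-q)"
      by (simp add: mult_right_mono)
    also have "\<dots> = b powr (-1 + al + -q)" by (simp only: powr_add)
    also have "-1 + al + -q = -ga" using gdef by linarith
    finally show ?thesis by (smt (verit) powr_ge_zero)
  qed
  have "a powr (-1 + al) / r powr (1 + be) = a powr (-1 + al) * (r powr (-(q/2)) * r powr (-(p/2)) * r powr (-(p/2)))"
    using e1 by (metis times_divide_eq_right mult_1_right)
  also have "\<dots> \<le> a powr (-1 + al) * (b powr (-q) * c powr (-p) * d powr (-p))"
    by (intro mult_left_mono mult_mono h1 h2 h3) auto
  also have "\<dots> = (a powr (-1 + al) * b powr (-q)) * c powr (-p) * d powr (-p)" by simp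
  also have "\<dots> \<le> (a powr (-ga) + b powr (-ga)) * c powr (-p) * d powr (-p)"
    by (intro mult_right_mono h4) auto
  finally show ?thesis unfolding r_def .
qed

lemma prod_nn:
  fixes f :: "'a::euclidean_space \<Rightarrow> ennreal" and h :: "'b::euclidean_space \<Rightarrow> ennreal"
  assumes [measurable]: "f \<in> borel_measurable borel" "h \<in> borel_measurable borel"
  shows "(\<integral>\<^sup>+z. f (fst z) * h (snd z) \<partial>(lborel::('a\<times>'b) measure)) = (\<integral>\<^sup>+x. f x \<partial>lborel) * (\<integral>\<^sup>+y. h y \<partial>lborel)"
proof -
  have "(\<integral>\<^sup>+z. f (fst z) * h (snd z) \<partial>(lborel::('a\<times>'b) measure))
      = (\<integral>\<^sup>+z. f (fst z) * h (snd z) \<partial>(lborel \<Otimes>\<^sub>M lborel))" by (simp add: lborel_prod)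
  also have "\<dots> = (\<integral>\<^sup>+x. \<integral>\<^sup>+y. f x * h y \<partial>lborel \<partial>lborel)"
    by (subst lborel.nn_integral_fst[symmetric]) auto
  also have "\<dots> = (\<integral>\<^sup>+x. f x * (\<integral>\<^sup>+y. h y \<partial>lborel) \<partial>lborel)"
    by (simp add: nn_integral_cmult)
  also have "\<dots> = (\<integral>\<^sup>+x. f x \<partial>lborel) * (\<integral>\<^sup>+y. h y \<partial>lborel)"
    by (simp add: nn_integral_multc)
  finally show ?thesis .
qed

lemma half_fin:
  fixes g :: real assumes "0 \<le> g" "g < 1"
  shows "(\<integral>\<^sup>+t. indicator {0..2::real} t * ennreal (t powr -g) \<partial>lborel) = ennreal (2 powr (1 - g) / (1 - g))"
proof -
  have "((\<lambda>x. x powr (-g)) has_integral (2 powr (-g+1) / (-g+1))) {0..2::real}"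
    by (rule has_integral_powr_from_0) (use assms in auto)
  hence "((\<lambda>x. indicator {0..2::real} x * x powr (-g)) has_integral (2 powr (1-g) / (1-g))) UNIV"
  proof -
    assume H: "((\<lambda>x. x powr (-g)) has_integral (2 powr (-g+1) / (-g+1))) {0..2::real}"
    have "((\<lambda>x. if x \<in> {0..2::real} then x powr (-g) else 0) has_integral (2 powr (-g+1) / (-g+1))) UNIV"
      using H by (simp only: has_integral_restrict_UNIV)
    moreover have "(\<lambda>x. if x \<in> {0..2::real} then x powr (-g) else 0) = (\<lambda>x. indicator {0..2::real} x * x powr (-g))"
      by (auto simp: indicator_def)
    ultimately show ?thesis by simp
  qed
  hence "integral\<^sup>N lborel (\<lambda>x. indicator {0..2::real} x * x powr (-g)) = ennreal (2 powr (1-g) / (1-g))"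
    by (rule nn_integral_has_integral_lborel[rotated 2]) (auto simp: indicator_def)
  then show ?thesis by (rule trans[rotated]) (intro nn_integral_cong, auto simp: indicator_def)
qed


lemma full_fin:
  fixes g :: real assumes "0 \<le> g" "g < 1"
  shows "(\<integral>\<^sup>+t. indicator {-2..2::real} t * ennreal (\<bar>t\<bar> powr -g) \<partial>lborel) \<le> 2 * ennreal (2 powr (1 - g) / (1 - g))"
proof -
  define P where "P = (\<lambda>t::real. indicator {0..2::real} t * ennreal (t powr -g))"
  have [measurable]: "P \<in> borel_measurable borel" unfolding P_def by measurable
  have "(\<integral>\<^sup>+t. indicator {-2..2::real} t * ennreal (\<bar>t\<bar> powr -g) \<partial>lborel) \<le> (\<integral>\<^sup>+t. P t + P (-t) \<partial>lborel)"
    by (intro nn_integral_mono) (auto simp: P_def indicator_def)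
  also have "\<dots> = (\<integral>\<^sup>+t. P t \<partial>lborel) + (\<integral>\<^sup>+t. P (-t) \<partial>lborel)"
    by (intro nn_integral_add) auto
  also have "(\<integral>\<^sup>+t. P (-t) \<partial>lborel) = (\<integral>\<^sup>+t. P t \<partial>lborel)"
    using nn_integral_real_affine[of P "-1" 0] by simp
  also have "(\<integral>\<^sup>+t. P t \<partial>lborel) = ennreal (2 powr (1 - g) / (1 - g))"
    unfolding P_def by (rule half_fin) (use assms in auto)
  finally show ?thesis by (simp add: mult_2)
qed

lemma shift_bound:
  fixes g x :: real assumes "\<bar>x\<bar> \<le> 1"
  shows "(\<integral>\<^sup>+u. indicator {-1..1::real} u * ennreal (\<bar>u - x\<bar> powr -g) \<partial>lborel)
     \<le> (\<integral>\<^sup>+t. indicator {-2..2::real} t * ennreal (\<bar>t\<bar> powr -g) \<partial>lborel)"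
proof -
  define h where "h = (\<lambda>u::real. indicator {-1..1::real} u * ennreal (\<bar>u - x\<bar> powr -g))"
  have [measurable]: "h \<in> borel_measurable borel" unfolding h_def by measurable
  have "(\<integral>\<^sup>+u. h u \<partial>lborel) = (\<integral>\<^sup>+s. h (x + s) \<partial>lborel)"
    using nn_integral_real_affine[of h 1 x] by simp
  also have "\<dots> \<le> (\<integral>\<^sup>+t. indicator {-2..2::real} t * ennreal (\<bar>t\<bar> powr -g) \<partial>lborel)"
    by (intro nn_integral_mono) (use assms in \<open>auto simp: h_def indicator_def\<close>)
  finally show ?thesis unfolding h_def .
qed


theorem lemma3p2:
  fixes \<alpha> \<beta> :: real
  assumes "0 < \<alpha>" "\<alpha> \<le> 1" "0 \<le> \<beta>" "\<beta> < \<alpha> / 2"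
  shows "\<exists>A::real. \<forall>x1::real. \<bar>x1\<bar> \<le> 1 \<longrightarrow>
    nn_integral (lborel :: (real \<times> real \<times> real) measure)
      (\<lambda>(u1, u2, v2). indicator {(a, b, c). a\<^sup>2 + b\<^sup>2 + c\<^sup>2 < (1::real)} (u1, u2, v2) *
         ennreal (\<bar>u1 - x1\<bar> powr (-1 + \<alpha>) / (u1\<^sup>2 + u2\<^sup>2 + v2\<^sup>2) powr (1 + \<beta>)))
    \<le> ennreal A"
proof -
  define q where "q = \<alpha>/2 + \<beta>"
  define p where "p = 1 + \<beta> - q/2"
  define ga where "ga = 1 - \<alpha> + q"
  have q0: "q \<ge> 0" and p0: "0 \<le> p" and p1: "p < 1" and g0: "0 \<le> ga" and g1: "ga < 1"
    and pq: "q/2 + p = 1 + \<beta>"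
    using assms by (auto simp: q_def p_def ga_def)
  define Cg where "Cg = 2 * (2 powr (1 - ga) / (1 - ga))"
  define Cp where "Cp = 2 * (2 powr (1 - p) / (1 - p))"
  have Cg0: "Cg \<ge> 0" using g1 by (simp add: Cg_def)
  have Cp0: "Cp \<ge> 0" using p1 by (simp add: Cp_def)
  have Kg: "(\<integral>\<^sup>+t. indicator {-2..2::real} t * ennreal (\<bar>t\<bar> powr -ga) \<partial>lborel) \<le> ennreal Cg"
  proof -
    have "ennreal Cg = 2 * ennreal (2 powr (1 - ga) / (1 - ga))" unfolding Cg_def using g1 by (subst ennreal_mult'') auto
    thus ?thesis using full_fin[OF g0 g1] by simp
  qed
  have Kp: "(\<integral>\<^sup>+t. indicator {-2..2::real} t * ennreal (\<bar>t\<bar> powr -p) \<partial>lborel) \<le> ennreal Cp"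
  proof -
    have "ennreal Cp = 2 * ennreal (2 powr (1 - p) / (1 - p))" unfolding Cp_def using p1 by (subst ennreal_mult'') auto
    thus ?thesis using full_fin[OF p0 p1] by simp
  qed
  show ?thesis
  proof (intro exI allI impI)
    fix x1 :: real assume x1: "\<bar>x1\<bar> \<le> 1"
    define G1 where "G1 = (\<lambda>u::real. indicator {-1..1::real} u *
        (if u = 0 \<or> u = x1 then \<infinity> else ennreal (\<bar>u - x1\<bar> powr -ga + \<bar>u\<bar> powr -ga)))"
    define G2 where "G2 = (\<lambda>u::real. indicator {-1..1::real} u *
        (if u = 0 then \<infinity> else ennreal (\<bar>u\<bar> powr -p)))"
    have mG1[measurable]: "G1 \<in> borel_measurable borel" unfolding G1_def by measurable
    have mG2[measurable]: "G2 \<in> borel_measurable borel" unfolding G2_def by measurable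
    have iG1: "(\<integral>\<^sup>+u. G1 u \<partial>lborel) \<le> ennreal (2 * Cg)"
    proof -
      have "(\<integral>\<^sup>+u. G1 u \<partial>lborel) = (\<integral>\<^sup>+u. indicator {-1..1::real} u * ennreal (\<bar>u - x1\<bar> powr -ga)
           + indicator {-1..1::real} u * ennreal (\<bar>u - 0\<bar> powr -ga) \<partial>lborel)"
        apply (intro nn_integral_cong_AE)
        using AE_lborel_singleton[of 0] AE_lborel_singleton[of x1]
        by eventually_elim (auto simp: G1_def indicator_def ennreal_plus)
      also have "\<dots> = (\<integral>\<^sup>+u. indicator {-1..1::real} u * ennreal (\<bar>u - x1\<bar> powr -ga) \<partial>lborel)
           + (\<integral>\<^sup>+u. indicator {-1..1::real} u * ennreal (\<bar>u - 0\<bar> powr -ga) \<partial>lborel)"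
        by (intro nn_integral_add) auto
      also have "\<dots> \<le> ennreal Cg + ennreal Cg"
        by (intro add_mono order_trans[OF shift_bound Kg]) (use x1 in auto)
      also have "\<dots> = ennreal (2 * Cg)" using Cg0 by (simp add: ennreal_plus[symmetric] del: ennreal_plus)
      finally show ?thesis .
    qed
    have iG2: "(\<integral>\<^sup>+u. G2 u \<partial>lborel) \<le> ennreal Cp"
    proof -
      have "(\<integral>\<^sup>+u. G2 u \<partial>lborel) = (\<integral>\<^sup>+u. indicator {-1..1::real} u * ennreal (\<bar>u - 0\<bar> powr -p) \<partial>lborel)"
        apply (intro nn_integral_cong_AE)
        using AE_lborel_singleton[of 0]
        by eventually_elim (auto simp: G2_def indicator_def)
      also have "\<dots> \<le> ennreal Cp"
        by (intro order_trans[OF shift_bound Kp]) auto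
      finally show ?thesis .
    qed
    have "nn_integral (lborel :: (real \<times> real \<times> real) measure)
      (\<lambda>(u1, u2, v2). indicator {(a, b, c). a\<^sup>2 + b\<^sup>2 + c\<^sup>2 < (1::real)} (u1, u2, v2) *
         ennreal (\<bar>u1 - x1\<bar> powr (-1 + \<alpha>) / (u1\<^sup>2 + u2\<^sup>2 + v2\<^sup>2) powr (1 + \<beta>)))
      \<le> (\<integral>\<^sup>+z. G1 (fst z) * (\<lambda>w. G2 (fst w) * G2 (snd w)) (snd z) \<partial>(lborel :: (real \<times> real \<times> real) measure))"
    proof (intro nn_integral_mono, clarify)
      fix a b c :: real
      show "indicator {(a, b, c). a\<^sup>2 + b\<^sup>2 + c\<^sup>2 < (1::real)} (a, b, c) *
         ennreal (\<bar>a - x1\<bar> powr (-1 + \<alpha>) / (a\<^sup>2 + b\<^sup>2 + c\<^sup>2) powr (1 + \<beta>))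
         \<le> G1 (fst (a, b, c)) * (\<lambda>w. G2 (fst w) * G2 (snd w)) (snd (a, b, c))"
      proof (cases "a\<^sup>2 + b\<^sup>2 + c\<^sup>2 < 1")
        case False thus ?thesis by simp
      next
        case inb: True
        have sq1: "\<bar>t\<bar> \<le> 1" if "t\<^sup>2 < 1" for t :: real
          using that by (simp add: abs_square_less_1)
        have ia: "\<bar>a\<bar> \<le> 1" by (rule sq1) (use inb zero_le_power2[of b] zero_le_power2[of c] in linarith)
        have ib: "\<bar>b\<bar> \<le> 1" by (rule sq1) (use inb zero_le_power2[of a] zero_le_power2[of c] in linarith)
        have ic: "\<bar>c\<bar> \<le> 1" by (rule sq1) (use inb zero_le_power2[of a] zero_le_power2[of b] in linarith)
        have ind: "indicator {(a, b, c). a\<^sup>2 + b\<^sup>2 + c\<^sup>2 < (1::real)} (a, b, c) = (1::ennreal)"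
          using inb by simp
        show ?thesis
        proof (cases "a = x1")
          case True thus ?thesis by simp
        next
          case ax: False
          show ?thesis
          proof (cases "a = 0 \<or> b = 0 \<or> c = 0")
            case True
            have "G1 a \<noteq> 0" "G2 b \<noteq> 0" "G2 c \<noteq> 0"
              using ia ib ic by (auto simp: G1_def G2_def indicator_def add_pos_nonneg)
            moreover have "G1 a = \<infinity> \<or> G2 b = \<infinity> \<or> G2 c = \<infinity>"
              using True ia ib ic by (auto simp: G1_def G2_def)
            ultimately have "G1 a * (G2 b * G2 c) = \<infinity>"
              by (auto simp: ennreal_mult_eq_top_iff)
            thus ?thesis by simp
          next
            case False
            have a0: "\<bar>a - x1\<bar> > 0" using ax by simp
            have "\<bar>a - x1\<bar> powr (-1 + \<alpha>) / (\<bar>a\<bar>\<^sup>2 + \<bar>b\<bar>\<^sup>2 + \<bar>c\<bar>\<^sup>2) powr (1 + \<beta>)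
              \<le> (\<bar>a - x1\<bar> powr (-ga) + \<bar>a\<bar> powr (-ga)) * \<bar>b\<bar> powr (-p) * \<bar>c\<bar> powr (-p)"
              by (rule real_bound[OF a0 _ _ _ q0 pq]) (use False assms in \<open>auto simp: ga_def p_def q_def\<close>)
            hence R: "\<bar>a - x1\<bar> powr (-1 + \<alpha>) / (a\<^sup>2 + b\<^sup>2 + c\<^sup>2) powr (1 + \<beta>)
              \<le> (\<bar>a - x1\<bar> powr (-ga) + \<bar>a\<bar> powr (-ga)) * (\<bar>b\<bar> powr (-p) * \<bar>c\<bar> powr (-p))"
              by (simp add: mult.assoc)
            have "G1 a * (G2 b * G2 c) = ennreal ((\<bar>a - x1\<bar> powr (-ga) + \<bar>a\<bar> powr (-ga)) * (\<bar>b\<bar> powr (-p) * \<bar>c\<bar> powr (-p)))"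
            proof -
              have "a \<in> {-1..1}" "b \<in> {-1..1}" "c \<in> {-1..1}" using ia ib ic by auto
              thus ?thesis using False ax by (simp add: G1_def G2_def ennreal_mult'')
            qed
            thus ?thesis using R ind by (simp add: ennreal_leI)
          qed
        qed
      qed
    qed
    also have "\<dots> = (\<integral>\<^sup>+u. G1 u \<partial>lborel) * ((\<integral>\<^sup>+u. G2 u \<partial>lborel) * (\<integral>\<^sup>+u. G2 u \<partial>lborel))"
    proof -
      have "(\<lambda>w::real\<times>real. G2 (fst w) * G2 (snd w)) \<in> borel_measurable borel"
        unfolding borel_prod[symmetric] by measurable
      thus ?thesis by (subst prod_nn) (auto simp: prod_nn)
    qed
    also have "\<dots> \<le> ennreal (2 * Cg) * (ennreal Cp * ennreal Cp)"
      by (intro mult_mono iG1 iG2) auto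
    also have "\<dots> = ennreal (2 * Cg * (Cp * Cp))"
      using Cg0 Cp0 by (simp add: ennreal_mult'' mult.assoc)
    finally show "nn_integral (lborel :: (real \<times> real \<times> real) measure)
      (\<lambda>(u1, u2, v2). indicator {(a, b, c). a\<^sup>2 + b\<^sup>2 + c\<^sup>2 < (1::real)} (u1, u2, v2) *
         ennreal (\<bar>u1 - x1\<bar> powr (-1 + \<alpha>) / (u1\<^sup>2 + u2\<^sup>2 + v2\<^sup>2) powr (1 + \<beta>)))
    \<le> ennreal (2 * Cg * (Cp * Cp))" .
  qed
qed

end
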